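(* Let $X$ be a separable infinite-dimensional Banach space and $T_1,\dots,T_N\in B(X)$ with $N\ge2$. Suppose there exist an increasing sequence $(n_k)$ of positive integers, a dense set $X_0\subset X$ and maps $S_k:X_0\to X$ such that (i) $T_i^{n_k}x\to0$ as $k\to\infty$ for every $x\in X_0$ and $1\le i\le N$; and (ii) for each $\epsilon>0$, $K\in\mathbb{N}$ and $x_0\in X_0$ there exists $k\ge K$ with $\|S_k(x_0)\|<\epsilon$ and $\|T_i^{n_k}S_k(x_0)-x_0\|<\epsilon$ for all $1\le i\le N$. Then $T_1,\dots,T_N$ satisfy the Simultaneous Blow-up/Collapse Property, and hence are densely s-hypercyclic.
   Context: $T_1,\dots,T_N$ satisfy the Simultaneous Blow-up/Collapse Property if for all non-empty open $W,U,V\subset X$ with $0\in W$ there is $n\in\mathbb{N}$ with $W\cap T_1^{-n}(U)\cap\cdots\cap T_N^{-n}(U)\ne\emptyset$ and $V\cap T_1^{-n}(W)\cap\cdots\cap T_N^{-n}(W)\ne\emptyset$. A vector $x$ is s-hypercyclic for $T_1,\dots,T_N$ if the closure of $\{(T_1^nx,\dots,T_N^nx):n\in\mathbb{N}\}$ in $\oplus_{i=1}^NX$ contains the diagonal $\{(y,\dots,y):y\in X\}$; the operators are densely s-hypercyclic if the set of s-hypercyclic vectors is dense in $X$. *)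

theory Defs
  imports "HOL-Analysis.Analysis"
begin

definition separable_space :: "'a::metric_space itself \<Rightarrow> bool" where
  "separable_space _ \<longleftrightarrow> (\<exists>D::'a set. countable D \<and> closure D = UNIV)"

definition infinite_dimensional :: "'a::real_vector itself \<Rightarrow> bool" where
  "infinite_dimensional _ \<longleftrightarrow> (\<forall>B::'a set. finite B \<longrightarrow> span B \<noteq> UNIV)"

definition SBCP :: "(nat \<Rightarrow> 'a::real_normed_vector \<Rightarrow> 'a) \<Rightarrow> nat \<Rightarrow> bool" where
  "SBCP T N \<longleftrightarrow>
    (\<forall>W U V. open W \<and> open U \<and> open V \<and> W \<noteq> {} \<and> U \<noteq> {} \<and> V \<noteq> {} \<and> 0 \<in> W \<longrightarrow>
      (\<exists>n\<ge>1. W \<inter> (\<Inter>i\<in>{1..N}. (T i ^^ n) -` U) \<noteq> {} \<and>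
              V \<inter> (\<Inter>i\<in>{1..N}. (T i ^^ n) -` W) \<noteq> {}))"

text \<open>x is s-hypercyclic: the diagonal lies in the closure (in the finite product
  space X^N) of the orbit (T_1^n x, ..., T_N^n x), n \<ge> 1; membership in the closure
  of a subset of the finite product is written out coordinatewise.\<close>
definition s_hypercyclic :: "(nat \<Rightarrow> 'a::real_normed_vector \<Rightarrow> 'a) \<Rightarrow> nat \<Rightarrow> 'a \<Rightarrow> bool" where
  "s_hypercyclic T N x \<longleftrightarrow>
    (\<forall>y e. e > 0 \<longrightarrow> (\<exists>n\<ge>1. \<forall>i\<in>{1..N}. dist ((T i ^^ n) x) y < e))"

definition densely_s_hypercyclic :: "(nat \<Rightarrow> 'a::real_normed_vector \<Rightarrow> 'a) \<Rightarrow> nat \<Rightarrow> bool" where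
  "densely_s_hypercyclic T N \<longleftrightarrow> closure {x. s_hypercyclic T N x} = UNIV"

end

theory Submission
  imports Defs
begin

lemma funpow_bl: fixes f :: "'a::real_normed_vector \<Rightarrow> 'a" shows "bounded_linear f \<Longrightarrow> bounded_linear (f ^^ n)"
proof (induction n)
  case 0
  show ?case unfolding funpow_0 id_def by (rule bounded_linear_ident)
next
  case (Suc n) then show ?case by (simp add: bounded_linear_compose)
qed

lemma open_meets_dense:
  assumes "closure X0 = UNIV" "open V" "V \<noteq> {}"
  shows "\<exists>v. v \<in> V \<and> v \<in> X0"
  using assms open_Int_closure_eq_empty[of V X0] by auto

lemma dense_by_open:
  fixes A :: "'a::metric_space set"
  assumes "\<And>V. open V \<Longrightarrow> V \<noteq> {} \<Longrightarrow> V \<inter> A \<noteq> {}"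
  shows "closure A = UNIV"
proof (rule ccontr)
  assume "closure A \<noteq> UNIV"
  then have "open (- closure A)" "- closure A \<noteq> {}" by auto
  then have "(- closure A) \<inter> A \<noteq> {}" using assms by blast
  then show False using closure_subset by blast
qed

theorem theorem3p1:
  fixes T :: "nat \<Rightarrow> 'a::banach \<Rightarrow> 'a"
    and N :: nat
    and n :: "nat \<Rightarrow> nat"
    and X0 :: "'a set"
    and S :: "nat \<Rightarrow> 'a \<Rightarrow> 'a"
  assumes "separable_space TYPE('a)"
    and "infinite_dimensional TYPE('a)"
    and "N \<ge> 2"
    and "\<And>i. i \<in> {1..N} \<Longrightarrow> bounded_linear (T i)"
    and "strict_mono n" and "\<And>k. n k > 0"
    and "closure X0 = UNIV"
    and "\<And>x i. x \<in> X0 \<Longrightarrow> i \<in> {1..N} \<Longrightarrow> ((\<lambda>k. (T i ^^ n k) x) \<longlongrightarrow> 0) sequentially"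
    and "\<And>e K x0. e > 0 \<Longrightarrow> x0 \<in> X0 \<Longrightarrow>
           \<exists>k\<ge>K. norm (S k x0) < e \<and> (\<forall>i\<in>{1..N}. norm ((T i ^^ n k) (S k x0) - x0) < e)"
  shows "SBCP T N \<and> densely_s_hypercyclic T N"
proof -
  note bl = assms(4) and X0d = assms(7) and lim = assms(8) and ii = assms(9)
  have evsmall: "\<exists>K. \<forall>k\<ge>K. \<forall>i\<in>{1..N}. norm ((T i ^^ n k) v) < e"
    if "v \<in> X0" "e > 0" for v e
  proof -
    have "\<forall>i\<in>{1..N}. eventually (\<lambda>k. dist ((T i ^^ n k) v) 0 < e) sequentially"
      using lim[OF that(1)] tendstoD that(2) by blast
    then have "eventually (\<lambda>k. \<forall>i\<in>{1..N}. dist ((T i ^^ n k) v) 0 < e) sequentially"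
      by (intro eventually_ball_finite) auto
    then show ?thesis by (simp add: eventually_sequentially)
  qed
  have sbcp: "SBCP T N"
    unfolding SBCP_def
  proof (intro allI impI)
    fix W U V :: "'a set"
    assume H: "open W \<and> open U \<and> open V \<and> W \<noteq> {} \<and> U \<noteq> {} \<and> V \<noteq> {} \<and> 0 \<in> W"
    obtain u where u: "u \<in> U" "u \<in> X0" using open_meets_dense[OF X0d] H by blast
    obtain v where v: "v \<in> V" "v \<in> X0" using open_meets_dense[OF X0d] H by blast
    obtain r where r: "r > 0" "ball 0 r \<subseteq> W" using H open_contains_ball by blast
    obtain s where s: "s > 0" "ball u s \<subseteq> U" using H u open_contains_ball by blast
    obtain K where K: "\<forall>k\<ge>K. \<forall>i\<in>{1..N}. norm ((T i ^^ n k) v) < r"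
      using evsmall[OF v(2) r(1)] by blast
    obtain k where k: "k \<ge> K" "norm (S k u) < min r s"
      "\<forall>i\<in>{1..N}. norm ((T i ^^ n k) (S k u) - u) < min r s"
      using ii[of "min r s" u K] r s u by auto
    have "S k u \<in> W \<inter> (\<Inter>i\<in>{1..N}. (T i ^^ n k) -` U)"
    proof -
      have "S k u \<in> W" using k(2) r(2) by (auto simp: dist_norm)
      moreover have "(T i ^^ n k) (S k u) \<in> U" if "i \<in> {1..N}" for i
      proof -
        have "dist u ((T i ^^ n k) (S k u)) < s" using k(3) that
          by (auto simp: dist_norm norm_minus_commute)
        then show ?thesis using s(2) by auto
      qed
      ultimately show ?thesis by auto
    qed
    moreover have "v \<in> V \<inter> (\<Inter>i\<in>{1..N}. (T i ^^ n k) -` W)"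
      using v K k(1) r(2) by (force simp: dist_norm)
    ultimately show "\<exists>m\<ge>1. W \<inter> (\<Inter>i\<in>{1..N}. (T i ^^ m) -` U) \<noteq> {} \<and>
              V \<inter> (\<Inter>i\<in>{1..N}. (T i ^^ m) -` W) \<noteq> {}"
      using assms(6)[of k] by (intro exI[of _ "n k"]) auto
  qed
  have key: "\<exists>x\<in>V. \<exists>m\<ge>1. \<forall>i\<in>{1..N}. dist ((T i ^^ m) x) y < e"
    if V: "open V" "V \<noteq> {}" and e: "e > 0" for V y e
  proof -
    obtain v where v: "v \<in> V" "v \<in> X0" using open_meets_dense[OF X0d] V by blast
    obtain r where r: "r > 0" "ball v r \<subseteq> V" using V v open_contains_ball by blast
    obtain u where u: "u \<in> ball y (e/2)" "u \<in> X0"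
      using open_meets_dense[OF X0d, of "ball y (e/2)"] e by auto
    obtain K where K: "\<forall>k\<ge>K. \<forall>i\<in>{1..N}. norm ((T i ^^ n k) v) < e/4"
      using evsmall[OF v(2), of "e/4"] e by auto
    obtain k where k: "k \<ge> K" "norm (S k u) < min r (e/4)"
      "\<forall>i\<in>{1..N}. norm ((T i ^^ n k) (S k u) - u) < min r (e/4)"
      using ii[of "min r (e/4)" u K] r e u by auto
    have "v + S k u \<in> V" using r(2) k(2) by (auto simp: dist_norm)
    moreover have "dist ((T i ^^ n k) (v + S k u)) y < e" if i: "i \<in> {1..N}" for i
    proof -
      have bli: "bounded_linear (T i ^^ n k)" using funpow_bl bl i by blast
      have "(T i ^^ n k) (v + S k u) = (T i ^^ n k) v + ((T i ^^ n k) (S k u) - u) + u"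
        using linear_add[OF bounded_linear.linear[OF bli]] by simp
      moreover have "norm ((T i ^^ n k) v) < e/4" using K k(1) i by blast
      moreover have "norm ((T i ^^ n k) (S k u) - u) < e/4" using k(3) i by auto
      moreover have "norm (u - y) < e/2" using u(1) by (simp add: dist_norm norm_minus_commute)
      ultimately show ?thesis
        using norm_triangle_ineq[of "(T i ^^ n k) v + ((T i ^^ n k) (S k u) - u)" "u - y"]
          norm_triangle_ineq[of "(T i ^^ n k) v" "(T i ^^ n k) (S k u) - u"]
        by (simp add: dist_norm algebra_simps)
    qed
    ultimately show ?thesis using assms(6)[of k] by (intro bexI[of _ "v + S k u"] exI[of _ "n k"]) auto
  qed
  obtain D :: "'a set" where D: "countable D" "closure D = UNIV"
    using assms(1) unfolding separable_space_def by blast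
  define G where "G = (\<lambda>(y, m::nat). {x. \<exists>m'\<ge>1. \<forall>i\<in>{1..N}. dist ((T i ^^ m') x) y < 1 / Suc m})"
  have Gopen: "open (G p)" for p
  proof -
    obtain y m where p: "p = (y, m)" by fastforce
    have eq: "G p = (\<Union>m'\<in>{1..}. \<Inter>i\<in>{1..N}. (T i ^^ m') -` ball y (1 / Suc m))"
      by (auto simp: G_def p dist_commute)
    have "open ((T i ^^ m') -` ball y (1 / Suc m))" if "i \<in> {1..N}" for i m'
    proof -
      have "bounded_linear (T i ^^ m')" using funpow_bl bl that by blast
      then have "continuous_on UNIV (T i ^^ m')"
        by (simp add: linear_continuous_on)
      then show ?thesis using open_vimage[of "ball y (1 / Suc m)" "T i ^^ m'"] by simp
    qed
    then show ?thesis unfolding eq by (intro open_UN ballI open_INT) auto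
  qed
  have Gdense: "closure (G p) = UNIV" for p
  proof -
    obtain y m where p: "p = (y, m)" by fastforce
    show ?thesis
    proof (rule dense_by_open)
      fix V :: "'a set" assume "open V" "V \<noteq> {}"
      from key[OF this, of "1 / Suc m" y] show "V \<inter> G p \<noteq> {}"
        by (auto simp: G_def p)
    qed
  qed
  have "euclidean closure_of \<Inter>(G ` (D \<times> UNIV)) = topspace euclidean"
    by (rule Baire_category)
      (auto simp: completely_metrizable_space_euclidean D(1) Gopen Gdense)
  then have cl: "closure (\<Inter>(G ` (D \<times> UNIV))) = UNIV" by simp
  have sub: "\<Inter>(G ` (D \<times> UNIV)) \<subseteq> {x. s_hypercyclic T N x}"
  proof (clarsimp simp: s_hypercyclic_def)
    fix x y and e :: real
    assume x: "\<forall>a\<in>D. \<forall>b. x \<in> G (a, b)" and e: "0 < e"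
    obtain d where d: "d \<in> D" "dist d y < e/2"
      using D(2) closure_approachable[of y D] e by (metis UNIV_I half_gt_zero)
    obtain m where m: "inverse (real (Suc m)) < e/2"
      using reals_Archimedean[of "e/2"] e by auto
    from x d(1) obtain m' where m': "m' \<ge> 1" "\<forall>i\<in>{1..N}. dist ((T i ^^ m') x) d < 1 / Suc m"
      by (fastforce simp: G_def)
    show "\<exists>n\<ge>Suc 0. \<forall>i\<in>{Suc 0..N}. dist ((T i ^^ n) x) y < e"
    proof (intro exI[of _ m'] conjI ballI)
      fix i assume "i \<in> {Suc 0..N}"
      then have "dist ((T i ^^ m') x) d < 1 / Suc m" using m'(2) by auto
      then have "dist ((T i ^^ m') x) d < e/2" using m by (simp add: inverse_eq_divide)
      then show "dist ((T i ^^ m') x) y < e" using d(2) dist_triangle[of "(T i ^^ m') x" y d] by linarith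
    qed (use m' in auto)
  qed
  have "densely_s_hypercyclic T N"
    unfolding densely_s_hypercyclic_def using closure_mono[OF sub] cl by auto
  with sbcp show ?thesis by blast
qed

end
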